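(* Let $\mathcal{F}=\{f_1,\dots,f_M\}$ be a finite set of measurable functions from $\mathcal{X}$ to $[-1,1]$. Assume $\pi$ satisfies $\mathrm{MA}(\kappa)$ for some $\kappa\ge1$, and let $c>0$ be the constant for which $\pi$ satisfies $\mathrm{MAH}(\kappa)$. For $x>0$ and $f\in\mathcal{F}$ set $$Z_x(f)=\frac{A(f)-A_n(f)-(A(f^* )-A_n(f^* ))}{A(f)-A^*+x}.$$ Then for any positive numbers $t,x$ and any integer $n$, $$\mathbb{P}\Big[\max_{f\in\mathcal{F}}Z_x(f)>t\Big]\le M\left(\left(1+\frac{8cx^{1/\kappa}}{n(tx)^2}\right)\exp\left(-\frac{n(tx)^2}{8cx^{1/\kappa}}\right)+\left(1+\frac{16}{3ntx}\right)\exp\left(-\frac{3ntx}{16}\right)\right).$$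
   Context: $(X,Y)$ is a random pair on $\mathcal{X}\times\{-1,1\}$ with distribution $\pi$; $(X_i,Y_i)_{i=1}^n$ are i.i.d. copies. $\eta(x)=\mathbb{P}(Y=1\mid X=x)$, $f^*=\mathrm{sign}(2\eta-1)$, $R(f)=\mathbb{P}(Y\ne f(X))$, $R^*=R(f^* )$. Hinge risk $A(f)=\mathbb{E}[\max(1-Yf(X),0)]$, $A^*=\inf_fA(f)=A(f^* )$; empirical hinge risk $A_n(f)=\frac1n\sum_{i=1}^n\max(1-Y_if(X_i),0)$. $\mathrm{MA}(\kappa)$: exists $c_0>0$ with $\mathbb{E}|f(X)-f^*(X)|\le c_0(R(f)-R^* )^{1/\kappa}$ for all measurable $f:\mathcal{X}\to\{-1,1\}$. $\mathrm{MAH}(\kappa)$ with constant $c$: $\mathbb{E}|f(X)-f^*(X)|\le c(A(f)-A^* )^{1/\kappa}$ for all measurable $f:\mathcal{X}\to[-1,1]$. *)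

theory Defs
  imports "HOL-Probability.Probability"
begin

(* The joint law pi of (X,Y) is a probability measure P on SX \<Otimes> borel (Y real-valued,
   a.s. in {-1,1}). *)

text \<open>eta is a version of P(Y = 1 | X = x): a measurable function with
  P(X \<in> A, Y = 1) = integral over A of eta w.r.t. the law of X.\<close>
definition is_cond_prob_Y1 :: "'a measure \<Rightarrow> ('a \<times> real) measure \<Rightarrow> ('a \<Rightarrow> real) \<Rightarrow> bool" where
  "is_cond_prob_Y1 SX P \<eta> \<longleftrightarrow> \<eta> \<in> borel_measurable SX \<and>
     (\<forall>A \<in> sets SX. measure P (A \<times> {1}) = set_lebesgue_integral (distr P SX fst) A \<eta>)"

text \<open>Bayes rule f* = sign(2 eta - 1), with the convention sign(0) = 1.\<close>
definition bayes :: "('a \<Rightarrow> real) \<Rightarrow> 'a \<Rightarrow> real" where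
  "bayes \<eta> x = (if 2 * \<eta> x - 1 \<ge> 0 then 1 else -1)"

definition risk :: "('a \<times> real) measure \<Rightarrow> ('a \<Rightarrow> real) \<Rightarrow> real" where
  "risk P f = measure P {z \<in> space P. snd z \<noteq> f (fst z)}"

definition hinge_risk :: "('a \<times> real) measure \<Rightarrow> ('a \<Rightarrow> real) \<Rightarrow> real" where
  "hinge_risk P f = (\<integral>z. max (1 - snd z * f (fst z)) 0 \<partial>P)"

definition hinge_opt :: "('a \<times> real) measure \<Rightarrow> ('a \<Rightarrow> real) \<Rightarrow> real" where
  "hinge_opt P \<eta> = hinge_risk P (bayes \<eta>)"

definition emp_hinge_risk :: "nat \<Rightarrow> ('a \<Rightarrow> real) \<Rightarrow> (nat \<Rightarrow> 'a \<times> real) \<Rightarrow> real" where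
  "emp_hinge_risk n f \<omega> = (\<Sum>i<n. max (1 - snd (\<omega> i) * f (fst (\<omega> i))) 0) / real n"

definition MA :: "'a measure \<Rightarrow> ('a \<times> real) measure \<Rightarrow> ('a \<Rightarrow> real) \<Rightarrow> real \<Rightarrow> bool" where
  "MA SX P \<eta> \<kappa> \<longleftrightarrow> (\<exists>c0>0. \<forall>f. f \<in> borel_measurable SX \<and> (\<forall>x\<in>space SX. f x \<in> {-1, 1}) \<longrightarrow>
     (\<integral>z. \<bar>f (fst z) - bayes \<eta> (fst z)\<bar> \<partial>P) \<le> c0 * (risk P f - risk P (bayes \<eta>)) powr (1 / \<kappa>))"

definition MAH :: "'a measure \<Rightarrow> ('a \<times> real) measure \<Rightarrow> ('a \<Rightarrow> real) \<Rightarrow> real \<Rightarrow> real \<Rightarrow> bool" where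
  "MAH SX P \<eta> \<kappa> c \<longleftrightarrow> (\<forall>f. f \<in> borel_measurable SX \<and> (\<forall>x\<in>space SX. f x \<in> {-1..1}) \<longrightarrow>
     (\<integral>z. \<bar>f (fst z) - bayes \<eta> (fst z)\<bar> \<partial>P) \<le> c * (hinge_risk P f - hinge_opt P \<eta>) powr (1 / \<kappa>))"

definition Zx :: "('a \<times> real) measure \<Rightarrow> ('a \<Rightarrow> real) \<Rightarrow> nat \<Rightarrow> real \<Rightarrow> ('a \<Rightarrow> real) \<Rightarrow> (nat \<Rightarrow> 'a \<times> real) \<Rightarrow> real" where
  "Zx P \<eta> n x f \<omega> =
     (hinge_risk P f - emp_hinge_risk n f \<omega> - (hinge_risk P (bayes \<eta>) - emp_hinge_risk n (bayes \<eta>) \<omega>))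
     / (hinge_risk P f - hinge_opt P \<eta> + x)"

end

theory Submission
  imports Defs
begin

lemma exp_le_quad_neg:
  fixes y :: real assumes "y \<le> 0" shows "exp y \<le> 1 + y + y\<^sup>2/2"
proof -
  have "(\<lambda>y. 1 + y + y\<^sup>2/2 - exp y) 0 \<le> (\<lambda>y. 1 + y + y\<^sup>2/2 - exp y) y"
  proof (rule DERIV_nonpos_imp_nonincreasing[OF assms])
    fix t :: real assume "y \<le> t" "t \<le> 0"
    have "DERIV (\<lambda>y. 1 + y + y\<^sup>2/2 - exp y) t :> 1 + t - exp t"
      by (auto intro!: derivative_eq_intros)
    moreover have "1 + t - exp t \<le> 0" using exp_ge_add_one_self[of t] by simp
    ultimately show "\<exists>d. DERIV (\<lambda>y. 1 + y + y\<^sup>2/2 - exp y) t :> d \<and> d \<le> 0" by blast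
  qed
  then show ?thesis by simp
qed

lemma aux_m:
  fixes y :: real assumes "0 \<le> y" shows "exp y * (2 - y) \<le> 2 + y"
proof -
  have "(\<lambda>y. 2 + y - exp y * (2 - y)) 0 \<le> (\<lambda>y. 2 + y - exp y * (2 - y)) y"
  proof (rule DERIV_nonneg_imp_nondecreasing[OF assms])
    fix t :: real assume "0 \<le> t" "t \<le> y"
    have "DERIV (\<lambda>y. 2 + y - exp y * (2 - y)) t :> 1 - (exp t * (2 - t) + exp t * (-1))"
      by (auto intro!: derivative_eq_intros)
    moreover have "exp t * (1 - t) \<le> 1"
    proof (cases "t \<le> 1")
      case True
      have "1 - t \<le> exp (-t)" using exp_ge_add_one_self[of "-t"] by simp
      hence "exp t * (1 - t) \<le> exp t * exp (-t)" by (intro mult_left_mono) auto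
      also have "\<dots> = 1" by (simp add: exp_minus)
      finally show ?thesis .
    next
      case False
      hence "exp t * (1 - t) \<le> 0" by (intro mult_nonneg_nonpos) auto
      thus ?thesis by simp
    qed
    ultimately show "\<exists>d. DERIV (\<lambda>y. 2 + y - exp y * (2 - y)) t :> d \<and> 0 \<le> d"
      by (intro exI[of _ "1 - (exp t * (2 - t) + exp t * (-1))"]) (auto simp: algebra_simps)
  qed
  then show ?thesis by simp
qed

lemma aux_k:
  fixes y :: real assumes "0 \<le> y" shows "exp y * (1 - y/3) \<le> 1 + 2*y/3 + y\<^sup>2/6"
proof -
  have "(\<lambda>y. 1 + 2*y/3 + y\<^sup>2/6 - exp y * (1 - y/3)) 0 \<le> (\<lambda>y. 1 + 2*y/3 + y\<^sup>2/6 - exp y * (1 - y/3)) y"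
  proof (rule DERIV_nonneg_imp_nondecreasing[OF assms])
    fix t :: real assume "0 \<le> t" "t \<le> y"
    have "DERIV (\<lambda>y. 1 + 2*y/3 + y\<^sup>2/6 - exp y * (1 - y/3)) t :> 2/3 + t/3 - (exp t * (1 - t/3) + exp t * (-1/3))"
      by (auto intro!: derivative_eq_intros simp: power2_eq_square algebra_simps)
    moreover have "exp t * (2 - t) \<le> 2 + t" using aux_m[OF \<open>0 \<le> t\<close>] .
    ultimately show "\<exists>d. DERIV (\<lambda>y. 1 + 2*y/3 + y\<^sup>2/6 - exp y * (1 - y/3)) t :> d \<and> 0 \<le> d"
      by (intro exI[of _ "2/3 + t/3 - (exp t * (1 - t/3) + exp t * (-1/3))"]) (auto simp: algebra_simps)
  qed
  then show ?thesis by simp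
qed

lemma exp_bern:
  fixes y c :: real assumes "0 \<le> c" "c < 3" "y \<le> c"
  shows "exp y \<le> 1 + y + y\<^sup>2 / (2 * (1 - c/3))"
proof (cases "y \<le> 0")
  case True
  have "y\<^sup>2/2 \<le> y\<^sup>2 / (2 * (1 - c/3))"
    using assms by (intro divide_left_mono) (auto simp: field_simps)
  then show ?thesis using exp_le_quad_neg[OF True] by linarith
next
  case False
  have pos: "1 - y/3 > 0" using assms by simp
  have "exp y \<le> (1 + 2*y/3 + y\<^sup>2/6) / (1 - y/3)"
    using aux_k[of y] False pos by (simp add: field_simps)
  also have "\<dots> = 1 + y + y\<^sup>2 / (2 * (1 - y/3))"
    using pos by (simp add: field_simps power2_eq_square)
  also have "y\<^sup>2 / (2 * (1 - y/3)) \<le> y\<^sup>2 / (2 * (1 - c/3))"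
    using assms pos by (intro divide_left_mono mult_pos_pos) auto
  finally show ?thesis by simp
qed


lemma bernstein_iid:
  fixes P :: "'b measure" and W :: "'b \<Rightarrow> real"
  assumes P: "prob_space P" and Wm[measurable]: "W \<in> borel_measurable P"
    and Wb: "AE z in P. W z \<le> b \<and> \<bar>W z\<bar> \<le> B"
    and W0: "(\<integral>z. W z \<partial>P) = 0"
    and W2: "(\<integral>z. (W z)\<^sup>2 \<partial>P) \<le> \<sigma>2"
    and b: "b \<ge> 0" and sig: "\<sigma>2 > 0" and s: "s > 0"
  shows "measure (PiM {..<n} (\<lambda>_. P)) {\<omega> \<in> space (PiM {..<n} (\<lambda>_. P)). real n * s \<le> (\<Sum>i<n. W (\<omega> i))}
           \<le> exp (- (real n * s\<^sup>2) / (2 * (\<sigma>2 + b * s / 3)))"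
proof -
  interpret P: prob_space P by (rule P)
  interpret PP: product_prob_space "\<lambda>_. P" "{..<n}"
    by (rule product_prob_spaceI) (simp add: P)
  interpret F: finite_product_prob_space "\<lambda>_. P" "{..<n}"
    by unfold_locales simp
  define D where "D = \<sigma>2 + b * s / 3"
  have "b * s \<ge> 0" using b s by simp
  hence D: "D > 0" using sig by (simp add: D_def)
  define l where "l = s / D"
  have l: "l > 0" using s D by (simp add: l_def)
  have lb: "l * b < 3"
  proof -
    have "l * b = b * s / D" by (simp add: l_def)
    also have "\<dots> < 3" using D sig by (simp add: D_def field_simps)
    finally show ?thesis .
  qed
  have lb0: "0 \<le> l * b" using l b by simp
  define K where "K = l\<^sup>2 * \<sigma>2 / (2 * (1 - l * b / 3))"
  have K: "K = l * s / 2"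
  proof -
    have h: "1 - l * b / 3 = \<sigma>2 / D" using D by (simp add: l_def D_def field_simps)
    have "K = l\<^sup>2 * \<sigma>2 / (2 * (\<sigma>2 / D))" by (simp add: K_def h)
    also have "\<dots> = l\<^sup>2 * D / 2" using D sig by (simp add: field_simps)
    also have "\<dots> = l * s / 2" using D by (simp add: l_def power2_eq_square field_simps)
    finally show ?thesis .
  qed
  have intW: "integrable P W"
    by (rule P.integrable_const_bound[where B=B]) (use Wb in auto)
  have intW2: "integrable P (\<lambda>z. (W z)\<^sup>2)"
    by (rule P.integrable_const_bound[where B="B\<^sup>2"])
       (use Wb in \<open>auto intro!: eventually_mono[OF Wb] simp del: power2_abs
          intro: order.trans[OF _ power_mono[of "\<bar>_\<bar>" B 2]]\<close>)
  have intE: "integrable P (\<lambda>z. exp (l * W z))"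
    by (rule P.integrable_const_bound[where B="exp (l * B)"])
       (use l in \<open>auto intro!: eventually_mono[OF Wb]\<close>)
  have mgf: "(\<integral>z. exp (l * W z) \<partial>P) \<le> exp K"
  proof -
    have "(\<integral>z. exp (l * W z) \<partial>P) \<le> (\<integral>z. 1 + l * W z + (l\<^sup>2 / (2 * (1 - l * b / 3))) * (W z)\<^sup>2 \<partial>P)"
    proof (rule integral_mono_AE)
      show "integrable P (\<lambda>z. 1 + l * W z + (l\<^sup>2 / (2 * (1 - l * b / 3))) * (W z)\<^sup>2)"
        using intW intW2 by auto
      show "AE z in P. exp (l * W z) \<le> 1 + l * W z + (l\<^sup>2 / (2 * (1 - l * b / 3))) * (W z)\<^sup>2"
      proof (rule eventually_mono[OF Wb])
        fix z assume "W z \<le> b \<and> \<bar>W z\<bar> \<le> B"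
        hence "l * W z \<le> l * b" using l by (intro mult_left_mono) auto
        from exp_bern[OF lb0 lb this]
        show "exp (l * W z) \<le> 1 + l * W z + (l\<^sup>2 / (2 * (1 - l * b / 3))) * (W z)\<^sup>2"
          by (simp add: power_mult_distrib)
      qed
    qed (rule intE)
    also have "\<dots> = 1 + l * (\<integral>z. W z \<partial>P) + (l\<^sup>2 / (2 * (1 - l * b / 3))) * (\<integral>z. (W z)\<^sup>2 \<partial>P)"
      using intW intW2 by (simp add: P.prob_space)
    also have "\<dots> \<le> 1 + K"
    proof -
      have "(l\<^sup>2 / (2 * (1 - l * b / 3))) * (\<integral>z. (W z)\<^sup>2 \<partial>P) \<le> (l\<^sup>2 / (2 * (1 - l * b / 3))) * \<sigma>2"
        using W2 lb by (intro mult_left_mono divide_nonneg_pos) (auto simp: mult.commute)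
      then show ?thesis unfolding W0 K_def by simp
    qed
    also have "\<dots> \<le> exp K" by (rule exp_ge_add_one_self)
    finally show ?thesis .
  qed
  have nnW: "(\<integral>\<^sup>+z. ennreal (exp (l * W z)) \<partial>P) \<le> ennreal (exp K)"
  proof -
    have "(\<integral>\<^sup>+z. ennreal (exp (l * W z)) \<partial>P) = ennreal (\<integral>z. exp (l * W z) \<partial>P)"
      by (rule nn_integral_eq_integral[OF intE]) auto
    also have "\<dots> \<le> ennreal (exp K)" using mgf by (rule ennreal_leI)
    finally show ?thesis .
  qed
  let ?M = "PiM {..<n} (\<lambda>_. P)"
  let ?f = "\<lambda>\<omega>. (\<Sum>i<n. W (\<omega> i))"
  have "emeasure ?M {\<omega> \<in> space ?M. real n * s \<le> ?f \<omega>} \<le>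
        ennreal (exp (-l * (real n * s))) * (\<integral>\<^sup>+\<omega>. ennreal (exp (l * ?f \<omega>)) * indicator (space ?M) \<omega> \<partial>?M)"
    by (rule Chernoff_ineq_nn_integral_ge[OF l]) auto
  also have "(\<integral>\<^sup>+\<omega>. ennreal (exp (l * ?f \<omega>)) * indicator (space ?M) \<omega> \<partial>?M)
           = (\<integral>\<^sup>+\<omega>. (\<Prod>i\<in>{..<n}. ennreal (exp (l * W (\<omega> i)))) \<partial>?M)"
    by (intro nn_integral_cong)
       (simp add: sum_distrib_left exp_sum prod_ennreal)
  also have "\<dots> = (\<Prod>i\<in>{..<n}. (\<integral>\<^sup>+z. ennreal (exp (l * W z)) \<partial>P))"
    by (rule PP.product_nn_integral_prod) auto
  also have "\<dots> \<le> (\<Prod>i\<in>{..<n}. ennreal (exp K))"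
    by (intro prod_mono_ennreal nnW)
  also have "ennreal (exp (-l * (real n * s))) * \<dots> = ennreal (exp (-l * (real n * s)) * exp K ^ n)"
    by (simp add: prod_ennreal ennreal_mult ennreal_power)
  also have "exp (-l * (real n * s)) * exp K ^ n = exp (- (real n * s\<^sup>2) / (2 * (\<sigma>2 + b * s / 3)))"
  proof -
    have "exp (-l * (real n * s)) * exp K ^ n = exp (-l * (real n * s) + real n * K)"
      by (simp add: exp_add exp_of_nat_mult[symmetric] exp_diff exp_minus field_simps)
    also have "-l * (real n * s) + real n * K = - (real n * s\<^sup>2) / (2 * D)"
      using D by (simp add: K l_def field_simps power2_eq_square)
    finally show ?thesis by (simp add: D_def)
  qed
  finally have that_le: "emeasure ?M {\<omega> \<in> space ?M. real n * s \<le> ?f \<omega>}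
                 \<le> ennreal (exp (- (real n * s\<^sup>2) / (2 * (\<sigma>2 + b * s / 3))))"
    by (simp add: mult_left_mono)
  then show ?thesis
  proof -
    note e = finite_measure.emeasure_eq_measure[OF prob_space.finite_measure[OF prob_space_PiM[OF P]]]
    show ?thesis using that_le[unfolded e] by (subst (asm) ennreal_le_iff) auto
  qed
qed



lemma bayes_meas[measurable]: "\<eta> \<in> borel_measurable SX \<Longrightarrow> bayes \<eta> \<in> borel_measurable SX"
  unfolding bayes_def[abs_def] by measurable

lemma bayes_pm: "bayes \<eta> u = 1 \<or> bayes \<eta> u = -1"
  by (simp add: bayes_def)

locale setting =
  fixes SX :: "'a measure" and P :: "('a \<times> real) measure" and \<eta> :: "'a \<Rightarrow> real"
  assumes P: "prob_space P"
    and sP: "sets P = sets (SX \<Otimes>\<^sub>M (borel :: real measure))"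
    and AEY: "AE z in P. snd z \<in> {-1, 1}"
    and cp: "is_cond_prob_Y1 SX P \<eta>"
begin

interpretation prob_space P by (rule P)

lemma spP: "space P = space SX \<times> UNIV"
  using sets_eq_imp_space_eq[OF sP] by (simp add: space_pair_measure)

lemma mfst[measurable]: "fst \<in> measurable P SX"
  using measurable_cong_sets[OF sP refl] measurable_fst by blast

lemma msnd[measurable]: "snd \<in> borel_measurable P"
  using measurable_cong_sets[OF sP refl] measurable_snd by blast

lemma meta[measurable]: "\<eta> \<in> borel_measurable SX"
  using cp by (simp add: is_cond_prob_Y1_def)

definition "PX = distr P SX fst"
definition "E1 B = {z \<in> space P. fst z \<in> B \<and> snd z = 1}"
definition "Em B = {z \<in> space P. fst z \<in> B \<and> snd z = -1}"
definition "EP B = {z \<in> space P. fst z \<in> B}"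

lemma sets_E[measurable]:
  assumes [measurable]: "B \<in> sets SX"
  shows "E1 B \<in> sets P" "Em B \<in> sets P" "EP B \<in> sets P"
  unfolding E1_def Em_def EP_def by measurable

lemma PX_prob: "prob_space PX"
  unfolding PX_def by (rule prob_space_distr) simp

lemma space_PX: "space PX = space SX" by (simp add: PX_def)

lemma measure_PX: "B \<in> sets SX \<Longrightarrow> measure PX B = measure P (EP B)"
  unfolding PX_def EP_def by (subst measure_distr) (auto intro!: arg_cong[where f="measure P"])

lemma E1_cp: "B \<in> sets SX \<Longrightarrow> measure P (E1 B) = (\<integral>u. indicator B u * \<eta> u \<partial>PX)"
proof -
  assume B: "B \<in> sets SX"
  have "B \<times> {1} = E1 B" using sets.sets_into_space[OF B] by (auto simp: E1_def spP)
  moreover have "measure P (B \<times> {1}) = (\<integral>u. indicator B u * \<eta> u \<partial>PX)"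
    using cp B by (simp add: is_cond_prob_Y1_def PX_def set_lebesgue_integral_def)
  ultimately show ?thesis by simp
qed

lemma Em_eq: assumes B[measurable]: "B \<in> sets SX"
  shows "measure P (Em B) = measure P (EP B) - measure P (E1 B)"
proof -
  have "measure P (EP B) = measure P (E1 B \<union> Em B)"
    by (intro finite_measure_eq_AE eventually_mono[OF AEY]) (auto simp: EP_def E1_def Em_def)
  also have "\<dots> = measure P (E1 B) + measure P (Em B)"
    by (intro finite_measure_Union) (auto simp: E1_def Em_def)
  finally show ?thesis by simp
qed

lemma approx:
  assumes B[measurable]: "B \<in> sets SX"
  defines "Bk \<equiv> (\<lambda>k::nat. B \<inter> {u \<in> space SX. \<bar>\<eta> u\<bar> \<le> real k})"
  shows "(\<lambda>k. measure P (E1 (Bk k))) \<longlonglongrightarrow> measure P (E1 B)"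
    and "(\<lambda>k. measure P (EP (Bk k))) \<longlonglongrightarrow> measure P (EP B)"
    and "\<And>k. Bk k \<in> sets SX" and "\<And>k u. u \<in> Bk k \<Longrightarrow> \<bar>\<eta> u\<bar> \<le> real k \<and> u \<in> B"
proof -
  show Bs: "\<And>k. Bk k \<in> sets SX" unfolding Bk_def by measurable
  show "\<And>k u. u \<in> Bk k \<Longrightarrow> \<bar>\<eta> u\<bar> \<le> real k \<and> u \<in> B" by (auto simp: Bk_def)
  have inc: "incseq Bk"
    by (auto simp: incseq_def Bk_def intro: order.trans)
  have un: "(\<Union>k. Bk k) = B"
  proof
    show "B \<subseteq> (\<Union>k. Bk k)"
    proof
      fix u assume "u \<in> B"
      moreover obtain k :: nat where "\<bar>\<eta> u\<bar> \<le> real k" using real_arch_simple by blast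
      ultimately show "u \<in> (\<Union>k. Bk k)" using sets.sets_into_space[OF B] by (auto simp: Bk_def)
    qed
  qed (auto simp: Bk_def)
  have "(\<lambda>k. measure P (E1 (Bk k))) \<longlonglongrightarrow> measure P (\<Union>k. E1 (Bk k))"
    using Bs inc by (intro finite_Lim_measure_incseq) (auto simp: incseq_def E1_def)
  moreover have "(\<Union>k. E1 (Bk k)) = E1 B" using un by (auto simp: E1_def)
  ultimately show "(\<lambda>k. measure P (E1 (Bk k))) \<longlonglongrightarrow> measure P (E1 B)" by simp
  have "(\<lambda>k. measure P (EP (Bk k))) \<longlonglongrightarrow> measure P (\<Union>k. EP (Bk k))"
    using Bs inc by (intro finite_Lim_measure_incseq) (auto simp: incseq_def EP_def)
  moreover have "(\<Union>k. EP (Bk k)) = EP B" using un by (auto simp: EP_def)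
  ultimately show "(\<lambda>k. measure P (EP (Bk k))) \<longlonglongrightarrow> measure P (EP B)" by simp
qed

lemma int_bdd:
  assumes [measurable]: "C \<in> sets SX" and bd: "\<And>u. u \<in> C \<Longrightarrow> \<bar>\<eta> u\<bar> \<le> K"
  shows "integrable PX (\<lambda>u. indicator C u * \<eta> u)"
proof -
  interpret X: prob_space PX by (rule PX_prob)
  show ?thesis
    by (rule X.integrable_const_bound[where B="\<bar>K\<bar>"]) (auto simp: PX_def indicator_def dest!: bd)
qed

lemma int_half:
  assumes [measurable]: "C \<in> sets SX"
  shows "integrable PX (\<lambda>u. indicator C u * (1/2::real))"
proof -
  interpret X: prob_space PX by (rule PX_prob)
  show ?thesis
    by (rule X.integrable_const_bound[where B=1]) (auto simp: PX_def indicator_def)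
qed

lemma L1:
  assumes B[measurable]: "B \<in> sets SX" and h: "\<And>u. u \<in> B \<Longrightarrow> \<eta> u \<ge> 1/2"
  shows "measure P (EP B) \<le> 2 * measure P (E1 B)"
proof -
  interpret X: prob_space PX by (rule PX_prob)
  define Bk where "Bk = (\<lambda>k::nat. B \<inter> {u \<in> space SX. \<bar>\<eta> u\<bar> \<le> real k})"
  have ap1: "(\<lambda>k. measure P (E1 (Bk k))) \<longlonglongrightarrow> measure P (E1 B)"
    using approx(1)[OF B] by (simp add: Bk_def)
  have ap2: "(\<lambda>k. measure P (EP (Bk k))) \<longlonglongrightarrow> measure P (EP B)"
    using approx(2)[OF B] by (simp add: Bk_def)
  have "measure P (EP (Bk k)) \<le> 2 * measure P (E1 (Bk k))" for k
  proof -
    have Bs: "Bk k \<in> sets SX" using approx(3)[OF B] by (simp add: Bk_def)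
    have sub: "Bk k \<subseteq> space SX" by (auto simp: Bk_def)
    have i1: "(\<integral>u. indicator (Bk k) u * (1/2::real) \<partial>PX) = measure PX (Bk k) / 2"
      by (simp add: space_PX Int_absorb2[OF sub])
    have i2: "(\<integral>u. indicator (Bk k) u * (1/2::real) \<partial>PX) \<le> (\<integral>u. indicator (Bk k) u * \<eta> u \<partial>PX)"
    proof (rule integral_mono)
      show "integrable PX (\<lambda>u. indicator (Bk k) u * (1/2::real))" by (rule int_half[OF Bs])
      show "integrable PX (\<lambda>u. indicator (Bk k) u * \<eta> u)"
        by (rule int_bdd[OF Bs, where K="real k"]) (simp add: Bk_def)
      fix u assume "u \<in> space PX"
      show "indicator (Bk k) u * (1/2::real) \<le> indicator (Bk k) u * \<eta> u"
      proof (cases "u \<in> Bk k")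
        case True
        then have "u \<in> B" by (simp add: Bk_def)
        with h True show ?thesis by simp
      qed simp
    qed
    have i3: "measure PX (Bk k) = measure P (EP (Bk k))" by (rule measure_PX[OF Bs])
    have i4: "measure P (E1 (Bk k)) = (\<integral>u. indicator (Bk k) u * \<eta> u \<partial>PX)" by (rule E1_cp[OF Bs])
    show ?thesis using i1 i2 i3 i4 by linarith
  qed
  then have "\<exists>N. \<forall>k\<ge>N. measure P (EP (Bk k)) \<le> 2 * measure P (E1 (Bk k))" by blast
  then show ?thesis by (rule LIMSEQ_le[OF ap2 tendsto_mult[OF tendsto_const ap1]])
qed

lemma L2:
  assumes B[measurable]: "B \<in> sets SX" and h: "\<And>u. u \<in> B \<Longrightarrow> \<eta> u \<le> 1/2"
  shows "2 * measure P (E1 B) \<le> measure P (EP B)"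
proof -
  interpret X: prob_space PX by (rule PX_prob)
  define Bk where "Bk = (\<lambda>k::nat. B \<inter> {u \<in> space SX. \<bar>\<eta> u\<bar> \<le> real k})"
  have ap1: "(\<lambda>k. measure P (E1 (Bk k))) \<longlonglongrightarrow> measure P (E1 B)"
    using approx(1)[OF B] by (simp add: Bk_def)
  have ap2: "(\<lambda>k. measure P (EP (Bk k))) \<longlonglongrightarrow> measure P (EP B)"
    using approx(2)[OF B] by (simp add: Bk_def)
  have "2 * measure P (E1 (Bk k)) \<le> measure P (EP (Bk k))" for k
  proof -
    have Bs: "Bk k \<in> sets SX" using approx(3)[OF B] by (simp add: Bk_def)
    have sub: "Bk k \<subseteq> space SX" by (auto simp: Bk_def)
    have i1: "(\<integral>u. indicator (Bk k) u * (1/2::real) \<partial>PX) = measure PX (Bk k) / 2"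
      by (simp add: space_PX Int_absorb2[OF sub])
    have i2: "(\<integral>u. indicator (Bk k) u * \<eta> u \<partial>PX) \<le> (\<integral>u. indicator (Bk k) u * (1/2::real) \<partial>PX)"
    proof (rule integral_mono)
      show "integrable PX (\<lambda>u. indicator (Bk k) u * (1/2::real))" by (rule int_half[OF Bs])
      show "integrable PX (\<lambda>u. indicator (Bk k) u * \<eta> u)"
        by (rule int_bdd[OF Bs, where K="real k"]) (simp add: Bk_def)
      fix u assume "u \<in> space PX"
      show "indicator (Bk k) u * \<eta> u \<le> indicator (Bk k) u * (1/2::real)"
      proof (cases "u \<in> Bk k")
        case True
        then have "u \<in> B" by (simp add: Bk_def)
        with h True show ?thesis by simp
      qed simp
    qed
    have i3: "measure PX (Bk k) = measure P (EP (Bk k))" by (rule measure_PX[OF Bs])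
    have i4: "measure P (E1 (Bk k)) = (\<integral>u. indicator (Bk k) u * \<eta> u \<partial>PX)" by (rule E1_cp[OF Bs])
    show ?thesis using i1 i2 i3 i4 by linarith
  qed
  then have "\<exists>N. \<forall>k\<ge>N. 2 * measure P (E1 (Bk k)) \<le> measure P (EP (Bk k))" by blast
  then show ?thesis by (rule LIMSEQ_le[OF tendsto_mult[OF tendsto_const ap1] ap2])
qed

end

lemma hinge_pm: "(y::real) = 1 \<or> y = -1 \<Longrightarrow> v \<in> {-1..1} \<Longrightarrow> max (1 - y * v) 0 = 1 - y * v"
  by auto

context setting
begin

interpretation prob_space P by (rule P)

lemma fst_space: "z \<in> space P \<Longrightarrow> fst z \<in> space SX"
  by (auto simp: spP)

lemma AEY': "AE z in P. fst z \<in> space SX \<and> (snd z = 1 \<or> snd z = -1)"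
  using AEY AE_space by eventually_elim (auto simp: spP)

lemma hinge_int:
  assumes [measurable]: "g \<in> borel_measurable SX" and gb: "\<forall>u\<in>space SX. g u \<in> {-1..1}"
  shows "integrable P (\<lambda>z. max (1 - snd z * g (fst z)) 0)"
proof (rule integrable_const_bound[where B=2])
  show "AE z in P. norm (max (1 - snd z * g (fst z)) 0) \<le> 2"
    using AEY' by eventually_elim (use gb in auto)
qed simp

lemma bayes_range: "bayes \<eta> u \<in> {-1..1}"
  using bayes_pm[of \<eta> u] by auto

lemma excess_nonneg:
  assumes fm[measurable]: "f \<in> borel_measurable SX" and fb: "\<forall>u\<in>space SX. f u \<in> {-1..1}"
  shows "hinge_risk P (bayes \<eta>) \<le> hinge_risk P f"
proof -
  define fs where "fs = bayes \<eta>"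
  have fsm[measurable]: "fs \<in> borel_measurable SX" unfolding fs_def by measurable
  have fspm: "fs u = 1 \<or> fs u = -1" for u unfolding fs_def by (rule bayes_pm)
  define S where "S = {u \<in> space SX. 2 * \<eta> u - 1 \<ge> 0}"
  have Sm[measurable]: "S \<in> sets SX" unfolding S_def by measurable
  have fsS: "u \<in> S \<Longrightarrow> fs u = 1" "u \<in> space SX \<Longrightarrow> u \<notin> S \<Longrightarrow> fs u = -1" for u
    by (auto simp: fs_def bayes_def S_def)
  have fsS': "u \<in> space SX \<Longrightarrow> fs u = (if u \<in> S then 1 else -1)" for u
    using fsS by auto
  define Ag where "Ag = {z \<in> space P. snd z = fs (fst z)}"
  define Dis where "Dis = {z \<in> space P. snd z = - fs (fst z)}"
  have Agm[measurable]: "Ag \<in> sets P" unfolding Ag_def by measurable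
  have Dism[measurable]: "Dis \<in> sets P" unfolding Dis_def by measurable
  define k where "k u = 1 - f u * fs u" for u
  have km[measurable]: "k \<in> borel_measurable SX" unfolding k_def[abs_def] by measurable
  have kb: "u \<in> space SX \<Longrightarrow> 0 \<le> k u \<and> k u \<le> 2" for u
    using fb fspm[of u] by (auto simp: k_def)
  have cmp: "measure P (Dis \<inter> EP X) \<le> measure P (Ag \<inter> EP X)" if X[measurable]: "X \<in> sets SX" for X
  proof -
    have XS[measurable]: "X \<inter> S \<in> sets SX" "X - S \<in> sets SX" by measurable
    have e1: "Dis \<inter> EP X = Em (X \<inter> S) \<union> E1 (X - S)"
      using sets.sets_into_space[OF X] by (auto simp: fsS' Dis_def EP_def Em_def E1_def spP split: if_splits)
    have e2: "Ag \<inter> EP X = E1 (X \<inter> S) \<union> Em (X - S)"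
      using sets.sets_into_space[OF X] by (auto simp: fsS' Ag_def EP_def Em_def E1_def spP split: if_splits)
    have "measure P (Dis \<inter> EP X) = measure P (Em (X \<inter> S)) + measure P (E1 (X - S))"
      unfolding e1 by (rule finite_measure_Union) (auto simp: Em_def E1_def)
    also have "\<dots> \<le> measure P (E1 (X \<inter> S)) + measure P (Em (X - S))"
    proof -
      have "measure P (EP (X \<inter> S)) \<le> 2 * measure P (E1 (X \<inter> S))"
        by (rule L1) (auto simp: S_def)
      moreover have "2 * measure P (E1 (X - S)) \<le> measure P (EP (X - S))"
        by (rule L2) (use sets.sets_into_space[OF X] in \<open>auto simp: S_def\<close>)
      ultimately show ?thesis using Em_eq[OF XS(1)] Em_eq[OF XS(2)] by linarith
    qed
    also have "\<dots> = measure P (Ag \<inter> EP X)"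
      unfolding e2 by (rule finite_measure_Union[symmetric]) (auto simp: Em_def E1_def)
    finally show ?thesis .
  qed
  define \<nu>A where "\<nu>A = distr (density P (indicator Ag)) SX fst"
  define \<nu>D where "\<nu>D = distr (density P (indicator Dis)) SX fst"
  have mfd: "fst \<in> measurable (density P g) SX" for g :: "_ \<Rightarrow> ennreal"
    using mfst by (simp add: measurable_cong_sets[OF sets_density refl])
  have em: "emeasure (distr (density P (indicator G)) SX fst) X = ennreal (measure P (G \<inter> EP X))"
    if [measurable]: "G \<in> sets P" "X \<in> sets SX" for G X
  proof -
    have "emeasure (distr (density P (indicator G)) SX fst) X
          = emeasure (density P (indicator G)) (fst -` X \<inter> space (density P (indicator G)))"
      by (rule emeasure_distr[OF mfd that(2)])
    also have "fst -` X \<inter> space (density P (indicator G)) = EP X"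
      by (auto simp: EP_def)
    also have "emeasure (density P (indicator G)) (EP X) = emeasure P (G \<inter> EP X)"
      by (rule emeasure_restricted) auto
    also have "\<dots> = ennreal (measure P (G \<inter> EP X))"
      by (rule emeasure_eq_measure)
    finally show ?thesis .
  qed
  have le: "\<nu>D \<le> \<nu>A"
    unfolding le_measure_iff
  proof (simp add: \<nu>A_def \<nu>D_def le_fun_def, intro allI)
    fix X
    show "emeasure (distr (density P (indicator Dis)) SX fst) X \<le> emeasure (distr (density P (indicator Ag)) SX fst) X"
    proof (cases "X \<in> sets SX")
      case True
      then show ?thesis using em[OF Dism True] em[OF Agm True] cmp[OF True]
        by (simp add: ennreal_leI)
    next
      case False
      then show ?thesis by (simp add: emeasure_notin_sets)
    qed
  qed
  have nnint: "(\<integral>\<^sup>+u. ennreal (k u) \<partial>distr (density P (indicator G)) SX fst)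
      = ennreal (\<integral>z. indicator G z * k (fst z) \<partial>P)" if [measurable]: "G \<in> sets P" for G
  proof -
    have "(\<integral>\<^sup>+u. ennreal (k u) \<partial>distr (density P (indicator G)) SX fst)
        = (\<integral>\<^sup>+z. ennreal (k (fst z)) \<partial>density P (indicator G))"
      by (rule nn_integral_distr[OF mfd]) simp
    also have "\<dots> = (\<integral>\<^sup>+z. indicator G z * ennreal (k (fst z)) \<partial>P)"
      by (rule nn_integral_density) auto
    also have "\<dots> = (\<integral>\<^sup>+z. ennreal (indicator G z * k (fst z)) \<partial>P)"
      by (intro nn_integral_cong) (simp add: indicator_def)
    also have "\<dots> = ennreal (\<integral>z. indicator G z * k (fst z) \<partial>P)"
    proof (rule nn_integral_eq_integral)
      show "integrable P (\<lambda>z. indicator G z * k (fst z))"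
        by (rule integrable_const_bound[where B=2])
           (auto intro!: AE_I2 simp: indicator_def dest: kb[OF fst_space])
      show "AE z in P. 0 \<le> indicator G z * k (fst z)"
        by (auto intro!: AE_I2 simp: indicator_def dest: kb[OF fst_space])
    qed
    finally show ?thesis .
  qed
  have "ennreal (\<integral>z. indicator Dis z * k (fst z) \<partial>P) \<le> ennreal (\<integral>z. indicator Ag z * k (fst z) \<partial>P)"
    using nn_integral_mono_measure[OF _ le, of "\<lambda>u. ennreal (k u)"] nnint[OF Dism] nnint[OF Agm]
    by (simp add: \<nu>A_def \<nu>D_def)
  moreover have "0 \<le> (\<integral>z. indicator Ag z * k (fst z) \<partial>P)"
    by (intro integral_nonneg_AE AE_I2) (auto simp: indicator_def dest: kb[OF fst_space])
  ultimately have ineq: "(\<integral>z. indicator Dis z * k (fst z) \<partial>P) \<le> (\<integral>z. indicator Ag z * k (fst z) \<partial>P)"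
    by (simp add: ennreal_le_iff)
  have i1: "integrable P (\<lambda>z. indicator Ag z * k (fst z))" "integrable P (\<lambda>z. indicator Dis z * k (fst z))"
    by (rule integrable_const_bound[where B=2]; auto intro!: AE_I2 simp: indicator_def dest: kb[OF fst_space])+
  have "hinge_risk P f - hinge_risk P fs
      = (\<integral>z. max (1 - snd z * f (fst z)) 0 - max (1 - snd z * fs (fst z)) 0 \<partial>P)"
    unfolding hinge_risk_def
    by (rule Bochner_Integration.integral_diff[symmetric]; rule hinge_int)
       (use fb bayes_range in \<open>auto simp: fs_def\<close>)
  also have "\<dots> = (\<integral>z. indicator Ag z * k (fst z) - indicator Dis z * k (fst z) \<partial>P)"
  proof (rule integral_cong_AE)
    show "AE z in P. max (1 - snd z * f (fst z)) 0 - max (1 - snd z * fs (fst z)) 0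
        = indicator Ag z * k (fst z) - indicator Dis z * k (fst z)"
      using AEY' AE_space
    proof eventually_elim
      case (elim z)
      then have fz: "f (fst z) \<in> {-1..1}" using fb by auto
      from elim fspm[of "fst z"] fz show ?case
        by (auto simp: Ag_def Dis_def k_def indicator_def algebra_simps)
    qed
  qed simp_all
  also have "\<dots> = (\<integral>z. indicator Ag z * k (fst z) \<partial>P) - (\<integral>z. indicator Dis z * k (fst z) \<partial>P)"
    by (rule Bochner_Integration.integral_diff[OF i1])
  finally show ?thesis using ineq by (simp add: fs_def)
qed

end

lemma numeric:
  fixes \<mu> x t c \<kappa> :: real and n :: nat
  assumes mu: "0 \<le> \<mu>" and x: "x > 0" and t: "t > 0" and c: "c > 0" and k: "\<kappa> \<ge> 1" and n: "n > 0"
  shows "exp (- (real n * (t * (\<mu> + x))\<^sup>2) / (2 * (2 * c * (\<mu> + x) powr (1 / \<kappa>) + 4 * (t * (\<mu> + x)) / 3)))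
         \<le> exp (- (real n * (t * x)\<^sup>2) / (8 * c * x powr (1 / \<kappa>))) + exp (- (3 * real n * t * x) / 16)"
proof -
  define y where "y = \<mu> + x"
  have y: "y > 0" "x \<le> y" using mu x by (auto simp: y_def)
  define s where "s = t * y"
  have s: "s > 0" using t y by (simp add: s_def)
  define \<sigma>2 where "\<sigma>2 = 2 * c * y powr (1 / \<kappa>)"
  have sig: "\<sigma>2 > 0" using c y by (simp add: \<sigma>2_def)
  have nr: "real n > 0" using n by simp
  define A where "A = real n * s\<^sup>2 / (2 * (\<sigma>2 + 4 * s / 3))"
  have lhs: "exp (- (real n * (t * (\<mu> + x))\<^sup>2) / (2 * (2 * c * (\<mu> + x) powr (1 / \<kappa>) + 4 * (t * (\<mu> + x)) / 3))) = exp (- A)"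
    by (simp add: A_def s_def \<sigma>2_def y_def)
  have "exp (- A) \<le> exp (- (real n * (t * x)\<^sup>2) / (8 * c * x powr (1 / \<kappa>))) \<or> exp (- A) \<le> exp (- (3 * real n * t * x) / 16)"
  proof (cases "4 * s / 3 \<le> \<sigma>2")
    case True
    have "real n * s\<^sup>2 / (4 * \<sigma>2) \<le> A"
      unfolding A_def using True sig s nr by (intro divide_left_mono) auto
    moreover have "real n * (t * x)\<^sup>2 / (8 * c * x powr (1 / \<kappa>)) \<le> real n * s\<^sup>2 / (4 * \<sigma>2)"
    proof -
      have e1: "z\<^sup>2 / z powr (1 / \<kappa>) = z powr (2 - 1 / \<kappa>)" if "z > 0" for z :: real
        using that by (simp add: powr_diff)
      have "x powr (2 - 1 / \<kappa>) \<le> y powr (2 - 1 / \<kappa>)"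
        using k x y by (intro powr_mono2) (auto simp: field_simps)
      hence "x\<^sup>2 / x powr (1 / \<kappa>) \<le> y\<^sup>2 / y powr (1 / \<kappa>)" using e1 x y by simp
      hence "(real n * t\<^sup>2 / (8 * c)) * (x\<^sup>2 / x powr (1 / \<kappa>)) \<le> (real n * t\<^sup>2 / (8 * c)) * (y\<^sup>2 / y powr (1 / \<kappa>))"
        using nr c by (intro mult_left_mono) auto
      thus ?thesis by (simp add: s_def \<sigma>2_def power_mult_distrib field_simps)
    qed
    ultimately show ?thesis by simp
  next
    case False
    have "real n * s\<^sup>2 / (2 * (4 * s / 3 + 4 * s / 3)) \<le> A"
      unfolding A_def using False sig s nr by (intro divide_left_mono) auto
    moreover have "real n * s\<^sup>2 / (2 * (4 * s / 3 + 4 * s / 3)) = 3 * real n * s / 16"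
      using s by (simp add: field_simps power2_eq_square)
    moreover have "3 * real n * t * x / 16 \<le> 3 * real n * s / 16"
      using y t nr by (simp add: s_def)
    ultimately have "3 * real n * t * x / 16 \<le> A" by linarith
    thus ?thesis by simp
  qed
  then show ?thesis unfolding lhs
    by (metis add.commute add_increasing exp_ge_zero)
qed





lemma hinge_lip:
  assumes "(y::real) = 1 \<or> y = -1" "a \<in> {-1..1}" "b \<in> {-1..1}"
  shows "\<bar>max (1 - y * a) 0 - max (1 - y * b) 0\<bar> \<le> \<bar>a - b\<bar> \<and> \<bar>a - b\<bar> \<le> 2"
proof -
  have "max (1 - y * a) 0 - max (1 - y * b) 0 = y * (b - a)"
    using hinge_pm[OF assms(1,2)] hinge_pm[OF assms(1,3)] by (simp add: algebra_simps)
  moreover have "\<bar>y * (b - a)\<bar> = \<bar>a - b\<bar>" using assms(1) by auto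
  moreover have "\<bar>a - b\<bar> \<le> 2" using assms(2,3) by auto
  ultimately show ?thesis by simp
qed

lemma sq_le4: "\<bar>d::real\<bar> \<le> 2 \<Longrightarrow> d\<^sup>2 \<le> 4"
proof -
  assume a: "\<bar>d\<bar> \<le> 2"
  have "\<bar>d\<bar>\<^sup>2 \<le> 2\<^sup>2" by (rule power_mono) (use a in auto)
  thus ?thesis by simp
qed

context setting
begin

interpretation prob_space P by (rule P)

lemma per_f:
  assumes fm[measurable]: "f \<in> borel_measurable SX" and fb: "\<forall>u\<in>space SX. f u \<in> {-1..1}"
    and k: "\<kappa> \<ge> 1" and c: "c > 0" and mah: "MAH SX P \<eta> \<kappa> c" and t: "t > 0" and x: "x > 0" and n: "n > 0"
  shows "\<exists>E \<in> sets (PiM {..<n} (\<lambda>_. P)).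
           {\<omega> \<in> space (PiM {..<n} (\<lambda>_. P)). Zx P \<eta> n x f \<omega> > t} \<subseteq> E \<and>
           measure (PiM {..<n} (\<lambda>_. P)) E
             \<le> exp (- (real n * (t * x)\<^sup>2) / (8 * c * x powr (1 / \<kappa>))) + exp (- (3 * real n * t * x) / 16)"
proof -
  define fs where "fs = bayes \<eta>"
  have fsm[measurable]: "fs \<in> borel_measurable SX" unfolding fs_def by measurable
  have fsb: "\<forall>u\<in>space SX. fs u \<in> {-1..1}" using bayes_range by (simp add: fs_def)
  define \<mu> where "\<mu> = hinge_risk P f - hinge_opt P \<eta>"
  have mu0: "0 \<le> \<mu>" using excess_nonneg[OF fm fb] by (simp add: \<mu>_def hinge_opt_def)
  define hf where "hf z = max (1 - snd z * f (fst z)) 0" for z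
  define hs where "hs z = max (1 - snd z * fs (fst z)) 0" for z
  define D where "D z = hf z - hs z" for z
  define W where "W z = \<mu> - D z" for z
  have Dm[measurable]: "D \<in> borel_measurable P"
    unfolding D_def[abs_def] hf_def[abs_def] hs_def[abs_def] by measurable
  have Wm[measurable]: "W \<in> borel_measurable P"
    unfolding W_def[abs_def] D_def[abs_def] hf_def[abs_def] hs_def[abs_def] by measurable
  have ihf: "integrable P hf" unfolding hf_def[abs_def] by (rule hinge_int[OF fm fb])
  have ihs: "integrable P hs" unfolding hs_def[abs_def] by (rule hinge_int[OF fsm fsb])
  have intD: "integrable P D" unfolding D_def[abs_def] using ihf ihs by simp
  have ED: "(\<integral>z. D z \<partial>P) = \<mu>"
    unfolding D_def[abs_def] using ihf ihs
    by (simp add: \<mu>_def hinge_risk_def hinge_opt_def hf_def[abs_def] hs_def[abs_def] fs_def)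
  have Dbd: "AE z in P. \<bar>D z\<bar> \<le> \<bar>f (fst z) - fs (fst z)\<bar> \<and> \<bar>f (fst z) - fs (fst z)\<bar> \<le> 2"
    using AEY'
  proof eventually_elim
    case (elim z)
    then have "f (fst z) \<in> {-1..1}" "fs (fst z) \<in> {-1..1}" using fb fsb by auto
    with elim show ?case
      unfolding D_def hf_def hs_def by (intro hinge_lip) auto
  qed
  have mu2: "\<mu> \<le> 2"
  proof -
    have "\<mu> = (\<integral>z. D z \<partial>P)" using ED by simp
    also have "\<dots> \<le> (\<integral>z. 2 \<partial>P)"
    proof (rule integral_mono_AE[OF intD])
      show "AE z in P. D z \<le> 2" using Dbd by eventually_elim auto
    qed simp
    finally show ?thesis by (simp add: prob_space)
  qed
  have Wb: "AE z in P. W z \<le> 4 \<and> \<bar>W z\<bar> \<le> 4"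
    using Dbd by eventually_elim (use mu0 mu2 in \<open>auto simp: W_def\<close>)
  have W0: "(\<integral>z. W z \<partial>P) = 0"
    unfolding W_def[abs_def] using intD ED by (simp add: prob_space)
  define \<sigma>2 where "\<sigma>2 = 2 * c * (\<mu> + x) powr (1 / \<kappa>)"
  have sig: "\<sigma>2 > 0" using c x mu0 by (simp add: \<sigma>2_def)
  have intabs: "integrable P (\<lambda>z. \<bar>f (fst z) - fs (fst z)\<bar>)"
  proof (rule integrable_const_bound[where B=2])
    show "AE z in P. norm \<bar>f (fst z) - fs (fst z)\<bar> \<le> 2" using Dbd by eventually_elim auto
  qed simp
  have intD2: "integrable P (\<lambda>z. (D z)\<^sup>2)"
  proof (rule integrable_const_bound[where B=4])
    show "AE z in P. norm ((D z)\<^sup>2) \<le> 4" using Dbd by eventually_elim (auto intro!: sq_le4)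
  qed simp
  have W2: "(\<integral>z. (W z)\<^sup>2 \<partial>P) \<le> \<sigma>2"
  proof -
    have "(\<integral>z. (W z)\<^sup>2 \<partial>P) = (\<integral>z. (D z)\<^sup>2 - 2 * \<mu> * D z + \<mu>\<^sup>2 \<partial>P)"
      by (simp add: W_def power2_eq_square algebra_simps)
    also have "\<dots> = (\<integral>z. (D z)\<^sup>2 \<partial>P) - 2 * \<mu> * (\<integral>z. D z \<partial>P) + \<mu>\<^sup>2"
      using intD intD2 by (simp add: prob_space)
    also have "\<dots> \<le> (\<integral>z. (D z)\<^sup>2 \<partial>P)" using ED by (simp add: power2_eq_square)
    also have "\<dots> \<le> (\<integral>z. 2 * \<bar>f (fst z) - fs (fst z)\<bar> \<partial>P)"
    proof (rule integral_mono_AE[OF intD2])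
      show "integrable P (\<lambda>z. 2 * \<bar>f (fst z) - fs (fst z)\<bar>)" using intabs by simp
      show "AE z in P. (D z)\<^sup>2 \<le> 2 * \<bar>f (fst z) - fs (fst z)\<bar>"
        using Dbd
      proof eventually_elim
        case (elim z)
        have "(D z)\<^sup>2 = \<bar>D z\<bar> * \<bar>D z\<bar>" by (simp add: power2_eq_square)
        also have "\<dots> \<le> \<bar>f (fst z) - fs (fst z)\<bar> * 2"
          using elim by (intro mult_mono) auto
        finally show ?case by simp
      qed
    qed
    also have "\<dots> = 2 * (\<integral>z. \<bar>f (fst z) - fs (fst z)\<bar> \<partial>P)" by simp
    also have "\<dots> \<le> 2 * (c * \<mu> powr (1 / \<kappa>))"
      using mah fm fb by (simp add: MAH_def \<mu>_def fs_def)
    also have "\<dots> \<le> \<sigma>2"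
      unfolding \<sigma>2_def using c mu0 x k by (simp add: powr_mono2)
    finally show ?thesis .
  qed
  define s where "s = t * (\<mu> + x)"
  have s: "s > 0" using t x mu0 by (simp add: s_def)
  let ?M = "PiM {..<n} (\<lambda>_. P)"
  define E where "E = {\<omega> \<in> space ?M. real n * s \<le> (\<Sum>i<n. W (\<omega> i))}"
  have Em: "E \<in> sets ?M" unfolding E_def by measurable
  have sub: "{\<omega> \<in> space ?M. Zx P \<eta> n x f \<omega> > t} \<subseteq> E"
  proof safe
    fix \<omega> assume om: "\<omega> \<in> space ?M" and z: "t < Zx P \<eta> n x f \<omega>"
    have nr: "real n > 0" using n by simp
    have emp: "emp_hinge_risk n f \<omega> - emp_hinge_risk n fs \<omega> = (\<Sum>i<n. D (\<omega> i)) / real n"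
      by (simp add: emp_hinge_risk_def D_def hf_def hs_def sum_subtractf diff_divide_distrib)
    have "Zx P \<eta> n x f \<omega> = (\<mu> - (\<Sum>i<n. D (\<omega> i)) / real n) / (\<mu> + x)"
      using emp by (simp add: Zx_def \<mu>_def hinge_opt_def fs_def algebra_simps)
    with z have "t * (\<mu> + x) < \<mu> - (\<Sum>i<n. D (\<omega> i)) / real n"
      using mu0 x by (simp add: pos_less_divide_eq)
    hence "real n * s < real n * \<mu> - (\<Sum>i<n. D (\<omega> i))"
      using nr by (simp add: s_def field_simps)
    moreover have "(\<Sum>i<n. W (\<omega> i)) = real n * \<mu> - (\<Sum>i<n. D (\<omega> i))"
      by (simp add: W_def sum_subtractf)
    ultimately show "\<omega> \<in> E" using om by (simp add: E_def)
  qed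
  have "measure ?M E \<le> exp (- (real n * s\<^sup>2) / (2 * (\<sigma>2 + 4 * s / 3)))"
    unfolding E_def by (rule bernstein_iid[OF P Wm Wb W0 W2 _ sig s]) simp
  also have "\<dots> \<le> exp (- (real n * (t * x)\<^sup>2) / (8 * c * x powr (1 / \<kappa>))) + exp (- (3 * real n * t * x) / 16)"
    unfolding s_def \<sigma>2_def by (rule numeric[OF mu0 x t c k n])
  finally show ?thesis using Em sub by blast
qed

end

theorem lemma5:
  fixes SX :: "'a measure" and P :: "('a \<times> real) measure" and \<eta> :: "'a \<Rightarrow> real"
    and F :: "('a \<Rightarrow> real) set" and \<kappa> c t x :: real and n :: nat
  assumes "prob_space P"
    and "sets P = sets (SX \<Otimes>\<^sub>M (borel :: real measure))"
    and "AE z in P. snd z \<in> {-1, 1}"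
    and "is_cond_prob_Y1 SX P \<eta>"
    and "finite F"
    and "\<forall>f\<in>F. f \<in> borel_measurable SX \<and> (\<forall>u\<in>space SX. f u \<in> {-1..1})"
    and "\<kappa> \<ge> 1" and "MA SX P \<eta> \<kappa>"
    and "c > 0" and "MAH SX P \<eta> \<kappa> c"
    and "t > 0" and "x > 0"
  shows "measure (PiM {..<n} (\<lambda>_. P))
           {\<omega> \<in> space (PiM {..<n} (\<lambda>_. P)). \<exists>f\<in>F. Zx P \<eta> n x f \<omega> > t}
         \<le> real (card F) *
           ((1 + 8 * c * x powr (1 / \<kappa>) / (real n * (t * x)\<^sup>2))
              * exp (- (real n * (t * x)\<^sup>2) / (8 * c * x powr (1 / \<kappa>)))
            + (1 + 16 / (3 * real n * t * x)) * exp (- (3 * real n * t * x) / 16))"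
proof -
  interpret S: setting SX P \<eta> using assms(1-4) by (simp add: setting_def)
  let ?M = "PiM {..<n} (\<lambda>_. P)"
  have PM: "prob_space ?M" by (rule prob_space_PiM) (simp add: assms(1))
  interpret M: prob_space ?M by (rule PM)
  define u where "u = exp (- (real n * (t * x)\<^sup>2) / (8 * c * x powr (1 / \<kappa>)))"
  define v where "v = exp (- (3 * real n * t * x) / 16)"
  define R where "R = (1 + 8 * c * x powr (1 / \<kappa>) / (real n * (t * x)\<^sup>2)) * u
            + (1 + 16 / (3 * real n * t * x)) * v"
  have uvR: "u + v \<le> R"
  proof -
    have "u \<le> (1 + 8 * c * x powr (1 / \<kappa>) / (real n * (t * x)\<^sup>2)) * u"
      using assms(9,11,12) by (simp add: u_def)
    moreover have "v \<le> (1 + 16 / (3 * real n * t * x)) * v"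
      using assms(9,11,12) by (simp add: v_def)
    ultimately show ?thesis by (simp add: R_def)
  qed
  show ?thesis
  proof (cases "n = 0")
    case True
    show ?thesis
    proof (cases "F = {}")
      case True
      then show ?thesis by simp
    next
      case False
      then have "card F \<ge> 1" using assms(5) by (simp add: Suc_le_eq card_gt_0_iff)
      moreover have "measure ?M {\<omega> \<in> space ?M. \<exists>f\<in>F. Zx P \<eta> n x f \<omega> > t} \<le> 1"
        by (rule M.prob_le_1)
      ultimately show ?thesis using \<open>n = 0\<close> by simp
    qed
  next
    case False
    then have n: "n > 0" by simp
    have ex1: "\<exists>E \<in> sets ?M. {\<omega> \<in> space ?M. Zx P \<eta> n x f \<omega> > t} \<subseteq> E \<and> measure ?M E \<le> u + v"
      if f: "f \<in> F" for f
    proof -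
      have fm: "f \<in> borel_measurable SX" "\<forall>u\<in>space SX. f u \<in> {-1..1}" using assms(6) f by auto
      show ?thesis unfolding u_def v_def
        by (rule S.per_f[OF fm assms(7) assms(9) assms(10) assms(11) assms(12) n])
    qed
    have ex: "\<forall>f\<in>F. \<exists>E. E \<in> sets ?M \<and> {\<omega> \<in> space ?M. Zx P \<eta> n x f \<omega> > t} \<subseteq> E \<and> measure ?M E \<le> u + v"
      using ex1 by blast
    obtain Ef where Ef0: "\<forall>f\<in>F. Ef f \<in> sets ?M \<and>
        {\<omega> \<in> space ?M. Zx P \<eta> n x f \<omega> > t} \<subseteq> Ef f \<and> measure ?M (Ef f) \<le> u + v"
      using bchoice[OF ex] by blast
    have Ef: "\<And>f. f \<in> F \<Longrightarrow> Ef f \<in> sets ?M \<and>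
        {\<omega> \<in> space ?M. Zx P \<eta> n x f \<omega> > t} \<subseteq> Ef f \<and> measure ?M (Ef f) \<le> u + v"
      using Ef0 by blast
    have "measure ?M {\<omega> \<in> space ?M. \<exists>f\<in>F. Zx P \<eta> n x f \<omega> > t} \<le> measure ?M (\<Union>f\<in>F. Ef f)"
    proof (rule M.finite_measure_mono)
      show "{\<omega> \<in> space ?M. \<exists>f\<in>F. Zx P \<eta> n x f \<omega> > t} \<subseteq> (\<Union>f\<in>F. Ef f)"
        using Ef by blast
      show "(\<Union>f\<in>F. Ef f) \<in> sets ?M"
        using Ef assms(5) by (intro sets.finite_UN) auto
    qed
    also have "\<dots> \<le> (\<Sum>f\<in>F. measure ?M (Ef f))"
      using Ef assms(5) by (intro measure_UNION_le) auto
    also have "\<dots> \<le> (\<Sum>f\<in>F. u + v)"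
      using Ef by (intro sum_mono) auto
    also have "\<dots> = real (card F) * (u + v)" by simp
    also have "\<dots> \<le> real (card F) * R"
      using uvR by (intro mult_left_mono) auto
    finally show ?thesis by (simp add: R_def u_def v_def)
  qed
qed

end
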